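(* Let (A.1), (A.2), (A.4), (A.5) and (A.6) below hold for some $q>2$ and $p\ge1$. Then $$\sup_{u\in[0,1]}|I_n^2(u)|=o_P(1/\sqrt n)+\mathcal O_P\big(L_n^{\min(p,2)}n^{-2/\max(p,2)}\big).$$ In particular, $\sup_{u\in[0,1]}|I_n^2(u)|=o_P(1/\sqrt n)$ if $L_n/n^{1/p-1/4}\to0$ in the case $p\ge2$, and if $L_n/n^{1/(2p)}\to0$ in the case $p\in[1,2)$.
   Context: $(\epsilon_i)_{i\in\mathbb Z}$ i.i.d. random variables; $\boldsymbol{\epsilon}_t=(\epsilon_t,\epsilon_{t-1},\dots)$. Measurable kernels $G_n,G:\mathbb R\times\mathbb R^\infty\to\mathbb R^d$, $X_{t,n}=G_n(t/n,\boldsymbol{\epsilon}_t)$, $\|Y\|_{L_q}=(\mathbb E\|Y\|^q)^{1/q}$, $\|G_n\|_{p\text{-var}}=\sup_{0=u_0<\dots<u_m=1}(\sum_i\|G_n(u_i,\boldsymbol{\epsilon}_0)-G_n(u_{i-1},\boldsymbol{\epsilon}_0)\|_{L_q}^p)^{1/p}$. (A.1) $\sup_u\|G_n(u,\boldsymbol{\epsilon}_0)-G(u,\boldsymbol{\epsilon}_0)\|_{L_q}\to0$. (A.2) $\sup_n\sup_u\|G_n(u,\boldsymbol{\epsilon}_0)\|_{L_q}+\sup_n\|G_n\|_{p\text{-var}}\le C_G<\infty$. $\mu^n_u=\mathbb EG_n(u,\boldsymbol{\epsilon}_0)$, $\mu_u=\mathbb EG(u,\boldsymbol{\epsilon}_0)$,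 $\mathcal M=\mathrm{conv}\{\mu_u:u\in[0,1]\}$, $\mathcal M^\delta$ its open $\delta$-neighborhood. $f:\mathbb R^d\to\mathbb R$ twice differentiable, Hessian $D^2f$. (A.4) for some $\delta\in(0,\infty]$, $C_f$: $|f|+\|Df\|+\|D^2f\|\le C_f$ on $\mathcal M^\delta$. Estimators $\hat\mu_{t,n}\in\mathbb R^d$ are $\sigma(\epsilon_t,\epsilon_{t-1},\dots)$-measurable; integer sequences $\tau_n\ge1$, $L_n\to\infty$. (A.5) $\sum_{t=\tau_n}^n\|\hat\mu_{t,n}-\mu^n_{t/n}\|^2=o_P(\sqrt n)$. (A.6) $P(\hat\mu_{t,n}\in\mathcal M^\delta,\ t=\tau_n,\dots,n)\to1$. Define $I_n^2(u)=\frac1n\sum_{t=\tau_n+L_n}^{\lfloor nu\rfloor}(\mu^n_{t/n}-\hat\mu_{t-L_n,n})^T\frac{D^2f(\tilde\mu_{t,n})}2(\mu^n_{t/n}-\hat\mu_{t-L_n,n})$, where $\tilde\mu_{t,n}$ is a point on the line segment between $\hat\mu_{t-L_n,n}$ and $\mu^n_{t/n}$ (the intermediate point in the Lagrange form of the second-order Taylor expansion of $f$). *)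

theory Defs
  imports "HOL-Probability.Probability"
begin

definition enn_powr :: "ennreal \<Rightarrow> real \<Rightarrow> ennreal" where
  "enn_powr x r = (if x = \<infinity> then \<infinity> else ennreal (enn2real x powr r))"

definition Lq_norm :: "'a measure \<Rightarrow> real \<Rightarrow> ('a \<Rightarrow> 'b::real_normed_vector) \<Rightarrow> ennreal" where
  "Lq_norm M q Y = enn_powr (\<integral>\<^sup>+ \<omega>. ennreal (norm (Y \<omega>) powr q) \<partial>M) (1 / q)"

definition epsvec :: "(int \<Rightarrow> 'a \<Rightarrow> real) \<Rightarrow> int \<Rightarrow> 'a \<Rightarrow> (nat \<Rightarrow> real)" where
  "epsvec eps t \<omega> = (\<lambda>k. eps (t - int k) \<omega>)"

definition partitions01 :: "(nat \<times> (nat \<Rightarrow> real)) set" where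
  "partitions01 = {(m, u). m \<ge> 1 \<and> u 0 = 0 \<and> u m = 1 \<and> (\<forall>i<m. u i < u (Suc i))}"

definition pvar :: "'a measure \<Rightarrow> real \<Rightarrow> real \<Rightarrow> (real \<Rightarrow> 'a \<Rightarrow> 'b::real_normed_vector) \<Rightarrow> ennreal" where
  "pvar M q p H = (SUP (m, u) \<in> partitions01.
      enn_powr (\<Sum>i<m. enn_powr (Lq_norm M q (\<lambda>\<omega>. H (u (Suc i)) \<omega> - H (u i) \<omega>)) p) (1 / p))"

definition past_sigma :: "'a measure \<Rightarrow> (int \<Rightarrow> 'a \<Rightarrow> real) \<Rightarrow> int \<Rightarrow> 'a measure" where
  "past_sigma M eps t = sigma (space M)
     {eps s -` B \<inter> space M | s B. s \<le> t \<and> B \<in> sets borel}"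

text \<open>Stochastic order symbols (defined via outer probability, so that no measurability
  of X is required; for measurable X they coincide with the usual notions).\<close>
definition small_oP :: "'a measure \<Rightarrow> (nat \<Rightarrow> 'a \<Rightarrow> real) \<Rightarrow> (nat \<Rightarrow> real) \<Rightarrow> bool" where
  "small_oP M X r \<longleftrightarrow> (\<forall>e>0. \<forall>\<eta>>0. \<forall>\<^sub>F n in sequentially.
      \<exists>A\<in>sets M. measure M A < \<eta> \<and> {\<omega>\<in>space M. \<bar>X n \<omega>\<bar> > e * r n} \<subseteq> A)"

definition big_OP :: "'a measure \<Rightarrow> (nat \<Rightarrow> 'a \<Rightarrow> real) \<Rightarrow> (nat \<Rightarrow> real) \<Rightarrow> bool" where
  "big_OP M X r \<longleftrightarrow> (\<forall>\<eta>>0. \<exists>K. \<forall>\<^sub>F n in sequentially.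
      \<exists>A\<in>sets M. measure M A < \<eta> \<and> {\<omega>\<in>space M. \<bar>X n \<omega>\<bar> > K * r n} \<subseteq> A)"

definition oP_plus_OP :: "'a measure \<Rightarrow> (nat \<Rightarrow> 'a \<Rightarrow> real) \<Rightarrow> (nat \<Rightarrow> real) \<Rightarrow> (nat \<Rightarrow> real) \<Rightarrow> bool" where
  "oP_plus_OP M X r s \<longleftrightarrow> (\<exists>Y Z. (\<forall>n. \<forall>\<omega>\<in>space M. X n \<omega> = Y n \<omega> + Z n \<omega>)
      \<and> small_oP M Y r \<and> big_OP M Z s)"

definition nbhd :: "'d::metric_space set \<Rightarrow> ereal \<Rightarrow> 'd set" where
  "nbhd S \<delta> = {x. \<exists>y\<in>S. ereal (dist x y) < \<delta>}"

end

theory Submission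
  imports Defs
begin

lemma enn_powr_ennreal: "c \<ge> 0 \<Longrightarrow> enn_powr (ennreal c) r = ennreal (c powr r)"
  by (simp add: enn_powr_def)

lemma Lq_integral_bound:
  fixes Z :: "'w \<Rightarrow> 'd::euclidean_space"
  assumes M: "prob_space M" and Zm: "Z \<in> borel_measurable M" and q: "q > 1"
    and fin: "Lq_norm M q Z \<noteq> \<infinity>"
  shows "integrable M Z \<and> ennreal (norm (integral\<^sup>L M Z)) \<le> Lq_norm M q Z"
proof -
  interpret prob_space M by fact
  define I where "I = (\<integral>\<^sup>+ \<omega>. ennreal (norm (Z \<omega>) powr q) \<partial>M)"
  have Ifin: "I \<noteq> \<infinity>" using fin unfolding Lq_norm_def enn_powr_def I_def by auto
  then obtain c where c: "I = ennreal c" "c \<ge> 0" by (cases I) auto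
  have Lq: "Lq_norm M q Z = ennreal (c powr (1/q))"
    using c unfolding Lq_norm_def I_def[symmetric] by (simp add: enn_powr_ennreal)
  show ?thesis
  proof (cases "c = 0")
    case True
    have "AE \<omega> in M. ennreal (norm (Z \<omega>) powr q) = 0"
      using c True unfolding I_def
      by (subst nn_integral_0_iff_AE[symmetric]) (use Zm in measurable)
    then have AE0: "AE \<omega> in M. Z \<omega> = 0"
      by eventually_elim (auto simp: powr_def split: if_splits)
    have "integrable M Z"
      using integrable_cong_AE[OF Zm _ AE0] by simp
    moreover have "integral\<^sup>L M Z = 0"
      using integral_cong_AE[OF Zm _ AE0] by simp
    ultimately show ?thesis by simp
  next
    case False
    with c have cpos: "c > 0" by simp
    define l where "l = c powr (1/q)"
    have lpos: "l > 0" using cpos by (simp add: l_def)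
    have lq: "l powr q = c" using cpos q by (simp add: l_def powr_powr)
    have pt: "ennreal (norm (Z \<omega>)) \<le> ennreal (l / (q * c)) * ennreal (norm (Z \<omega>) powr q) + ennreal (l * (1 - 1/q))" for \<omega>
    proof -
      have y: "(norm (Z \<omega>) / l) * 1 \<le> (norm (Z \<omega>) / l) powr q / q + 1 powr (q / (q - 1)) / (q / (q-1))"
        using q lpos by (intro Youngs_inequality) (auto simp: field_simps)
      have "(norm (Z \<omega>) / l) powr q = norm (Z \<omega>) powr q / c"
        using lpos lq by (simp add: powr_divide)
      with y have "norm (Z \<omega>) \<le> l * (norm (Z \<omega>) powr q / c / q + (q - 1) / q)"
        using lpos q by (simp add: field_simps)
      also have "\<dots> = (l / (q * c)) * norm (Z \<omega>) powr q + l * (1 - 1/q)"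
        using q cpos by (simp add: field_simps)
      finally show ?thesis
        using lpos q cpos by (simp add: ennreal_mult'[symmetric] ennreal_plus[symmetric] del: ennreal_plus)
    qed
    have mq: "(\<lambda>\<omega>. ennreal (norm (Z \<omega>) powr q)) \<in> borel_measurable M"
      using Zm by measurable
    have "(\<integral>\<^sup>+ \<omega>. ennreal (norm (Z \<omega>)) \<partial>M) \<le> (\<integral>\<^sup>+ \<omega>. ennreal (l / (q * c)) * ennreal (norm (Z \<omega>) powr q) + ennreal (l * (1 - 1/q)) \<partial>M)"
      by (intro nn_integral_mono pt)
    also have "\<dots> = ennreal (l / (q * c)) * I + ennreal (l * (1 - 1/q))"
      using mq unfolding I_def by (simp add: nn_integral_add nn_integral_cmult emeasure_space_1)
    also have "\<dots> = ennreal l"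
      using c cpos q lpos by (simp add: ennreal_mult'[symmetric] ennreal_plus[symmetric] field_simps del: ennreal_plus)
    finally have nI: "(\<integral>\<^sup>+ \<omega>. ennreal (norm (Z \<omega>)) \<partial>M) \<le> ennreal l" .
    have int: "integrable M Z"
      using nI Zm by (auto simp: integrable_iff_bounded intro: le_less_trans[OF _ ennreal_less_top])
    have "norm (integral\<^sup>L M Z) \<le> integral\<^sup>L M (\<lambda>\<omega>. norm (Z \<omega>))"
      by (rule integral_norm_bound)
    moreover have "ennreal (integral\<^sup>L M (\<lambda>\<omega>. norm (Z \<omega>))) = (\<integral>\<^sup>+ \<omega>. ennreal (norm (Z \<omega>)) \<partial>M)"
      using int by (intro nn_integral_eq_integral[symmetric]) auto
    ultimately have "ennreal (norm (integral\<^sup>L M Z)) \<le> ennreal l"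
      using nI by (metis ennreal_leI order_trans)
    then show ?thesis using int Lq by (simp add: l_def)
  qed
qed

lemma chain_bound:
  fixes H :: "real \<Rightarrow> 'w \<Rightarrow> 'd::real_normed_vector"
  assumes pv: "pvar M q p H \<le> ennreal C" and C: "C \<ge> 0" and p: "p \<ge> 1"
    and inc: "\<And>j. j < k \<Longrightarrow> v j < v (Suc j)" and v0: "0 < v 0" and vk: "v k \<le> 1"
  shows "(\<forall>j<k. Lq_norm M q (\<lambda>\<omega>. H (v (Suc j)) \<omega> - H (v j) \<omega>) \<noteq> \<infinity>) \<and>
    (\<Sum>j<k. enn2real (Lq_norm M q (\<lambda>\<omega>. H (v (Suc j)) \<omega> - H (v j) \<omega>)) powr p) \<le> C powr p"
proof -
  define u where "u i = (if i = 0 then 0 else if i \<le> k + 1 then v (i - 1) else 1)" for i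
  define m where "m = (if v k = 1 then k + 1 else k + 2)"
  have "v 0 \<le> v k"
  proof -
    have "v 0 \<le> v j" if "j \<le> k" for j using that
    proof (induction j)
      case (Suc j) then show ?case using inc[of j] by simp
    qed simp
    then show ?thesis by simp
  qed
  have part: "(m, u) \<in> partitions01"
    unfolding partitions01_def
  proof (safe)
    show "1 \<le> m" by (simp add: m_def)
    show "u 0 = 0" by (simp add: u_def)
    show "u m = 1" using vk by (auto simp: u_def m_def)
    fix i assume "i < m"
    then show "u i < u (Suc i)"
      using v0 vk inc[of "i - 1"]
      by (cases "i = Suc k") (auto simp: u_def m_def split: if_splits)
  qed
  define T where "T i = enn_powr (Lq_norm M q (\<lambda>\<omega>. H (u (Suc i)) \<omega> - H (u i) \<omega>)) p" for i
  define S where "S = (\<Sum>i<m. T i)"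
  have "enn_powr S (1/p) \<le> pvar M q p H"
    unfolding pvar_def S_def T_def
    by (rule SUP_upper2[OF part]) simp
  with pv have Sle: "enn_powr S (1/p) \<le> ennreal C" by simp
  then have Sfin: "S \<noteq> \<infinity>" by (auto simp: enn_powr_def top_unique)
  then obtain s where s: "S = ennreal s" "s \<ge> 0" by (cases S) auto
  from Sle s C have "s powr (1/p) \<le> C" by (simp add: enn_powr_def ennreal_le_iff)
  then have "(s powr (1/p)) powr p \<le> C powr p" using s p by (intro powr_mono2) auto
  then have sC: "s \<le> C powr p" using s p by (simp add: powr_powr)
  have sub: "(\<Sum>j<k. T (Suc j)) \<le> S"
  proof -
    have "(\<Sum>j<k. T (Suc j)) = (\<Sum>i\<in>Suc ` {..<k}. T i)"
      by (simp add: sum.reindex)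
    also have "\<dots> \<le> S" unfolding S_def
      by (rule sum_mono2) (auto simp: m_def)
    finally show ?thesis .
  qed
  have Tj: "T (Suc j) = enn_powr (Lq_norm M q (\<lambda>\<omega>. H (v (Suc j)) \<omega> - H (v j) \<omega>)) p" if "j < k" for j
    using that by (simp add: T_def u_def)
  have fin: "Lq_norm M q (\<lambda>\<omega>. H (v (Suc j)) \<omega> - H (v j) \<omega>) \<noteq> \<infinity>" if "j < k" for j
  proof
    assume "Lq_norm M q (\<lambda>\<omega>. H (v (Suc j)) \<omega> - H (v j) \<omega>) = \<infinity>"
    then have "T (Suc j) = \<infinity>" using Tj[OF that] by (simp add: enn_powr_def)
    then have "(\<Sum>j<k. T (Suc j)) = \<infinity>" using that by (auto simp: ennreal_sum_eq_top)
    with sub Sfin show False by (simp add: top_unique)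
  qed
  have "(\<Sum>j<k. T (Suc j)) = (\<Sum>j<k. ennreal (enn2real (Lq_norm M q (\<lambda>\<omega>. H (v (Suc j)) \<omega> - H (v j) \<omega>)) powr p))"
    using fin by (intro sum.cong refl) (auto simp: Tj enn_powr_def)
  also have "\<dots> = ennreal (\<Sum>j<k. enn2real (Lq_norm M q (\<lambda>\<omega>. H (v (Suc j)) \<omega> - H (v j) \<omega>)) powr p)"
    by (rule sum_ennreal) simp
  finally have "ennreal (\<Sum>j<k. enn2real (Lq_norm M q (\<lambda>\<omega>. H (v (Suc j)) \<omega> - H (v j) \<omega>)) powr p) \<le> ennreal (C powr p)"
    using sub s sC by (metis ennreal_leI order_trans)
  then show ?thesis using fin C by (auto simp: ennreal_le_iff2)
qed

lemma residue_sum: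
  fixes g :: "nat \<Rightarrow> real"
  assumes L: "L \<ge> 1" and a: "a \<ge> L + 1"
    and W: "W \<ge> 0"
    and ch: "\<And>b k. 1 \<le> b \<Longrightarrow> b + k * L \<le> n \<Longrightarrow> (\<Sum>j<k. g (b + Suc j * L)) \<le> W"
  shows "(\<Sum>t\<in>{a..n}. g t) \<le> real L * W"
proof -
  have "(\<Sum>t\<in>{a..n}. g t) = (\<Sum>c\<in>{..<L}. \<Sum>t\<in>{t\<in>{a..n}. (t - a) mod L = c}. g t)"
    using L by (intro sum.group[symmetric]) auto
  also have "\<dots> \<le> (\<Sum>c\<in>{..<L}. W)"
  proof (rule sum_mono)
    fix c assume c: "c \<in> {..<L}"
    define k where "k = (if a + c \<le> n then (n - a - c) div L + 1 else 0)"
    have set: "{t\<in>{a..n}. (t - a) mod L = c} = (\<lambda>j. a + c + j * L) ` {..<k}"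
    proof (intro set_eqI iffI)
      fix t assume t: "t \<in> {t\<in>{a..n}. (t - a) mod L = c}"
      define j where "j = (t - a) div L"
      have tj: "t = a + c + j * L" using t div_mult_mod_eq[of "t - a" L]
        by (auto simp: j_def algebra_simps)
      have "j < k"
      proof -
        have "a + c \<le> n" using t tj by auto
        moreover have "j * L \<le> n - a - c" using t tj by auto
        then have "j \<le> (n - a - c) div L" using L by (simp add: less_eq_div_iff_mult_less_eq)
        ultimately show ?thesis by (simp add: k_def)
      qed
      then show "t \<in> (\<lambda>j. a + c + j * L) ` {..<k}" using tj by auto
    next
      fix t assume "t \<in> (\<lambda>j. a + c + j * L) ` {..<k}"
      then obtain j where j: "j < k" "t = a + c + j * L" by auto
      then have ac: "a + c \<le> n" and "j \<le> (n - a - c) div L" by (auto simp: k_def split: if_splits)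
      then have "j * L \<le> n - a - c" using L by (simp add: less_eq_div_iff_mult_less_eq)
      then have "t \<le> n" using j ac by simp
      moreover have "(t - a) mod L = c" using j c by simp
      ultimately show "t \<in> {t\<in>{a..n}. (t - a) mod L = c}" using j by simp
    qed
    have inj: "inj_on (\<lambda>j. a + c + j * L) {..<k}" using L by (auto simp: inj_on_def)
    have "(\<Sum>t\<in>{t\<in>{a..n}. (t - a) mod L = c}. g t) = (\<Sum>j<k. g (a + c + j * L))"
      unfolding set by (simp add: sum.reindex[OF inj])
    also have "\<dots> = (\<Sum>j<k. g ((a + c - L) + Suc j * L))"
      using a by (intro sum.cong refl) (auto simp: algebra_simps)
    also have "\<dots> \<le> W"
    proof (cases "a + c \<le> n")
      case False then show ?thesis using W by (simp add: k_def)
    next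
      case True
      show ?thesis
    proof (rule ch)
      show "1 \<le> a + c - L" using a by simp
      show "a + c - L + k * L \<le> n"
      proof (cases "a + c \<le> n")
        case True
        have h: "(n - a - c) div L * L \<le> n - a - c" by (rule div_times_less_eq_dividend)
        have "a + c - L + k * L = a + c + (n - a - c) div L * L"
          using True a by (simp add: k_def algebra_simps)
        then show ?thesis using h True by linarith
      next
        case False then show ?thesis using True by simp
      qed
    qed
    qed
    finally show "(\<Sum>t\<in>{t\<in>{a..n}. (t - a) mod L = c}. g t) \<le> W" .
  qed
  also have "\<dots> = real L * W" by simp
  finally show ?thesis .
qed

lemma S1_bound:
  fixes d :: "nat \<Rightarrow> real"
  assumes d0: "\<And>t. d t \<ge> 0" and dC: "\<And>t. t \<in> {a..n} \<Longrightarrow> d t \<le> C" and C: "C \<ge> 0"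
    and sp: "(\<Sum>t\<in>{a..n}. d t powr p) \<le> real L * C powr p"
    and L: "L \<ge> 1" and n: "n \<ge> 1" and p: "p \<ge> 1" and a: "a \<ge> 1"
  shows "(\<Sum>t\<in>{a..n}. (d t)\<^sup>2) / real n
     \<le> (C\<^sup>2 + 1 + C powr p) * (real L powr (min p 2) * real n powr (- 2 / max p 2))"
proof (cases "p \<le> 2")
  case True
  have pt: "(d t)\<^sup>2 \<le> C powr (2 - p) * d t powr p" if "t \<in> {a..n}" for t
  proof (cases "d t = 0")
    case False
    then have dp: "d t > 0" using d0[of t] by simp
    have "(d t)\<^sup>2 = d t powr (2 - p) * d t powr p"
      using dp by (simp add: powr_add[symmetric] powr_numeral)
    also have "\<dots> \<le> C powr (2 - p) * d t powr p"
      using True dp dC[OF that] by (intro mult_right_mono powr_mono2) auto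
    finally show ?thesis .
  qed simp
  have "(\<Sum>t\<in>{a..n}. (d t)\<^sup>2) \<le> (\<Sum>t\<in>{a..n}. C powr (2 - p) * d t powr p)"
    by (intro sum_mono pt)
  also have "\<dots> = C powr (2 - p) * (\<Sum>t\<in>{a..n}. d t powr p)" by (simp add: sum_distrib_left)
  also have "\<dots> \<le> C powr (2 - p) * (real L * C powr p)"
    by (intro mult_left_mono sp) simp
  also have "\<dots> \<le> C\<^sup>2 * real L"
  proof (cases "C = 0")
    case False
    then have "C powr (2 - p) * C powr p = C\<^sup>2" using C
      by (simp add: powr_add[symmetric] powr_numeral)
    then show ?thesis by (simp add: algebra_simps)
  qed simp
  finally have S: "(\<Sum>t\<in>{a..n}. (d t)\<^sup>2) \<le> C\<^sup>2 * real L" .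
  have Lp: "real L \<le> real L powr p" using L p
  proof -
    have "real L powr 1 \<le> real L powr p" using L p by (intro powr_mono) auto
    then show ?thesis using L by simp
  qed
  have "(\<Sum>t\<in>{a..n}. (d t)\<^sup>2) / real n \<le> C\<^sup>2 * real L / real n"
    using S n by (simp add: divide_right_mono)
  also have "\<dots> \<le> C\<^sup>2 * (real L powr p / real n)"
  proof -
    have "real L / real n \<le> real L powr p / real n" using Lp by (rule divide_right_mono) simp
    then have "C\<^sup>2 * (real L / real n) \<le> C\<^sup>2 * (real L powr p / real n)" by (rule mult_left_mono) simp
    then show ?thesis by simp
  qed
  also have "\<dots> \<le> (C\<^sup>2 + 1 + C powr p) * (real L powr p / real n)"
    using n by (intro mult_right_mono) auto
  also have "real L powr p / real n = real L powr (min p 2) * real n powr (- 2 / max p 2)"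
  proof -
    have "max p 2 = 2" "min p 2 = p" using True by auto
    moreover have "real n powr (- 1) = 1 / real n" using n by (simp add: powr_minus_divide)
    ultimately show ?thesis by simp
  qed
  finally show ?thesis .
next
  case False
  define e where "e = (real L / real n) powr (1 / p)"
  have Ln: "real L / real n > 0" using L n by simp
  have epos: "e > 0" using L n by (simp add: e_def)
  have pt: "(d t)\<^sup>2 \<le> e\<^sup>2 + e powr (2 - p) * d t powr p" for t
  proof (cases "d t \<le> e")
    case True
    then have "(d t)\<^sup>2 \<le> e\<^sup>2" using d0[of t] by (simp add: power_mono)
    moreover have "e powr (2 - p) * d t powr p \<ge> 0" by simp
    ultimately show ?thesis by linarith
  next
    case False
    then have dp: "d t > e" by simp
    have "(d t)\<^sup>2 = d t powr (2 - p) * d t powr p"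
      using dp epos by (simp add: powr_add[symmetric] powr_numeral)
    also have "\<dots> \<le> e powr (2 - p) * d t powr p"
      using \<open>\<not> p \<le> 2\<close> dp epos by (intro mult_right_mono powr_mono2') auto
    finally have "(d t)\<^sup>2 \<le> e powr (2 - p) * d t powr p" .
    moreover have "e\<^sup>2 \<ge> 0" by simp
    ultimately show ?thesis by linarith
  qed
  have "(\<Sum>t\<in>{a..n}. (d t)\<^sup>2) \<le> (\<Sum>t\<in>{a..n}. e\<^sup>2 + e powr (2 - p) * d t powr p)"
    by (intro sum_mono pt)
  also have "\<dots> = real (card {a..n}) * e\<^sup>2 + e powr (2 - p) * (\<Sum>t\<in>{a..n}. d t powr p)"
    by (simp add: sum.distrib sum_distrib_left)
  also have "\<dots> \<le> real n * e\<^sup>2 + e powr (2 - p) * (real L * C powr p)"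
  proof -
    have "card {a..n} \<le> n" using a by simp
    then have "real (card {a..n}) * e\<^sup>2 \<le> real n * e\<^sup>2" by (intro mult_right_mono) auto
    moreover have "e powr (2 - p) * (\<Sum>t\<in>{a..n}. d t powr p) \<le> e powr (2 - p) * (real L * C powr p)"
      by (rule mult_left_mono[OF sp]) simp
    ultimately show ?thesis by linarith
  qed
  finally have S: "(\<Sum>t\<in>{a..n}. (d t)\<^sup>2) \<le> real n * e\<^sup>2 + e powr (2 - p) * (real L * C powr p)" .
  have e2: "e\<^sup>2 = (real L / real n) powr (2 / p)"
  proof -
    have "e\<^sup>2 = e powr 2" using epos by (simp add: powr_numeral)
    also have "\<dots> = (real L / real n) powr (2 / p)" using Ln by (simp add: e_def powr_powr)
    finally show ?thesis .
  qed
  have e3: "e powr (2 - p) * real L / real n = (real L / real n) powr (2 / p)"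
  proof -
    have "e powr (2 - p) = (real L / real n) powr (2 / p - 1)"
      using Ln False by (simp add: e_def powr_powr field_simps)
    moreover have "(real L / real n) powr (2 / p - 1) * (real L / real n) powr 1 = (real L / real n) powr (2 / p)"
      by (subst powr_add[symmetric]) simp
    ultimately have "e powr (2 - p) * (real L / real n) = (real L / real n) powr (2 / p)"
      using Ln by simp
    then show ?thesis by simp
  qed
  have "(\<Sum>t\<in>{a..n}. (d t)\<^sup>2) / real n \<le> (real n * e\<^sup>2 + e powr (2 - p) * (real L * C powr p)) / real n"
    using S n by (simp add: divide_right_mono)
  also have "\<dots> = e\<^sup>2 + (e powr (2 - p) * real L / real n) * C powr p"
    using n by (simp add: field_simps)
  also have "\<dots> = (1 + C powr p) * (real L / real n) powr (2 / p)"
    unfolding e3 e2 by (simp add: algebra_simps)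
  also have "(real L / real n) powr (2 / p) = real L powr (2 / p) * real n powr (- 2 / p)"
  proof -
    have "real n powr (- 2 / p) = real n powr (- (2 / p))" by simp
    also have "\<dots> = 1 / real n powr (2 / p)" by (rule powr_minus_divide)
    finally show ?thesis by (simp add: powr_divide)
  qed
  also have "(1 + C powr p) * (real L powr (2 / p) * real n powr (- 2 / p))
      \<le> (C\<^sup>2 + 1 + C powr p) * (real L powr 2 * real n powr (- 2 / p))"
  proof (rule mult_mono)
    have "real L powr (2 / p) \<le> real L powr 2"
      using L p False by (intro powr_mono) (auto simp: field_simps)
    then show "real L powr (2 / p) * real n powr (- 2 / p) \<le> real L powr 2 * real n powr (- 2 / p)"
      by (rule mult_right_mono) simp
  qed auto
  also have "real L powr 2 * real n powr (- 2 / p) = real L powr (min p 2) * real n powr (- 2 / max p 2)"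
    using False by (simp add: min_def max_def)
  finally show ?thesis by simp
qed

lemma oP_OP_small:
  assumes XYZ: "oP_plus_OP M X r s" and lim: "(\<lambda>n. s n / r n) \<longlonglongrightarrow> 0"
    and rpos: "\<forall>\<^sub>F n in sequentially. r n > 0" and spos: "\<forall>\<^sub>F n in sequentially. s n \<ge> 0"
  shows "small_oP M X r"
  unfolding small_oP_def
proof (intro allI impI)
  fix e \<eta> :: real assume e: "e > 0" and \<eta>: "\<eta> > 0"
  from XYZ obtain Y Z where dec: "\<And>n \<omega>. \<omega> \<in> space M \<Longrightarrow> X n \<omega> = Y n \<omega> + Z n \<omega>"
    and Y: "small_oP M Y r" and Z: "big_OP M Z s" unfolding oP_plus_OP_def by blast
  have e2: "e/2 > 0" and \<eta>2: "\<eta>/2 > 0" using e \<eta> by auto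
  note evY = Y[unfolded small_oP_def, rule_format, OF e2 \<eta>2]
  from Z[unfolded big_OP_def, rule_format, OF \<eta>2] obtain K where evZ:
    "\<forall>\<^sub>F n in sequentially. \<exists>A\<in>sets M. measure M A < \<eta>/2 \<and> {\<omega>\<in>space M. \<bar>Z n \<omega>\<bar> > K * s n} \<subseteq> A"
    by blast
  have "(e/2) / (\<bar>K\<bar> + 1) > 0" using e by (simp add: add_pos_nonneg)
  with lim have ev1: "\<forall>\<^sub>F n in sequentially. s n / r n < (e/2) / (\<bar>K\<bar> + 1)"
    by (auto dest: order_tendstoD(2))
  show "\<forall>\<^sub>F n in sequentially. \<exists>A\<in>sets M. measure M A < \<eta> \<and> {\<omega>\<in>space M. \<bar>X n \<omega>\<bar> > e * r n} \<subseteq> A"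
    using evY evZ ev1 rpos spos
  proof eventually_elim
    case (elim n)
    from elim(1) obtain A where A: "A \<in> sets M" "measure M A < \<eta>/2" "{\<omega>\<in>space M. \<bar>Y n \<omega>\<bar> > (e/2) * r n} \<subseteq> A" by blast
    from elim(2) obtain B where B: "B \<in> sets M" "measure M B < \<eta>/2" "{\<omega>\<in>space M. \<bar>Z n \<omega>\<bar> > K * s n} \<subseteq> B" by auto
    have "s n < (e/2) / (\<bar>K\<bar> + 1) * r n" using elim(3) elim(4) by (simp add: divide_less_eq)
    then have "(\<bar>K\<bar> + 1) * s n \<le> (e/2) * r n"
      by (simp add: field_simps add_pos_nonneg)
    moreover have "K * s n \<le> (\<bar>K\<bar> + 1) * s n" using elim(5)
      by (intro mult_right_mono) auto
    ultimately have Ks: "K * s n \<le> (e/2) * r n" by linarith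
    have "{\<omega>\<in>space M. \<bar>X n \<omega>\<bar> > e * r n} \<subseteq> A \<union> B"
    proof
      fix \<omega> assume w: "\<omega> \<in> {\<omega>\<in>space M. \<bar>X n \<omega>\<bar> > e * r n}"
      show "\<omega> \<in> A \<union> B"
      proof (rule ccontr)
        assume "\<omega> \<notin> A \<union> B"
        with A B w have "\<bar>Y n \<omega>\<bar> \<le> (e/2) * r n" "\<bar>Z n \<omega>\<bar> \<le> K * s n" by auto
        with w dec[of \<omega> n] Ks show False by auto
      qed
    qed
    moreover have "measure M (A \<union> B) < \<eta>"
      using measure_Un_le[OF A(1) B(1)] A(2) B(2) by linarith
    ultimately show ?case using A(1) B(1) by blast
  qed
qed

lemma rate_ge2:
  fixes L :: "nat \<Rightarrow> nat"
  assumes p: "p \<ge> 2" and lim: "(\<lambda>n. real (L n) / real n powr (1 / p - 1 / 4)) \<longlonglongrightarrow> 0"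
  shows "(\<lambda>n. (real (L n) powr (min p 2) * real n powr (- 2 / max p 2)) / (1 / sqrt (real n))) \<longlonglongrightarrow> 0"
proof -
  have "(\<lambda>n. (real (L n) / real n powr (1 / p - 1 / 4))\<^sup>2) \<longlonglongrightarrow> 0\<^sup>2"
    by (intro tendsto_power lim)
  then have l2: "(\<lambda>n. (real (L n) / real n powr (1 / p - 1 / 4))\<^sup>2) \<longlonglongrightarrow> 0" by simp
  show ?thesis
  proof (rule Lim_transform_eventually[OF l2])
    show "\<forall>\<^sub>F n in sequentially. (real (L n) / real n powr (1 / p - 1 / 4))\<^sup>2 =
      (real (L n) powr (min p 2) * real n powr (- 2 / max p 2)) / (1 / sqrt (real n))"
      using eventually_gt_at_top[of "0::nat"]
    proof eventually_elim
      case (elim n)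
      have np: "real n > 0" using elim by simp
      have mm: "min p 2 = 2" "max p 2 = p" using p by auto
      have Lp: "real (L n) powr 2 = (real (L n))\<^sup>2"
        by (cases "L n = 0") (simp_all add: powr_numeral)
      have sq: "sqrt (real n) = real n powr (1/2)" using np by (simp add: powr_half_sqrt)
      have d: "(real n powr (1 / p - 1 / 4))\<^sup>2 = real n powr (2 / p - 1 / 2)"
        using np by (simp add: powr_numeral[symmetric] powr_powr algebra_simps)
      have e: "real n powr (- 2 / p) * real n powr (1/2) = 1 / real n powr (2 / p - 1 / 2)"
        using np by (simp add: powr_add[symmetric] powr_minus_divide[symmetric] algebra_simps)
      have "(real (L n) powr (min p 2) * real n powr (- 2 / max p 2)) / (1 / sqrt (real n))
          = (real (L n))\<^sup>2 * (real n powr (- 2 / p) * real n powr (1/2))"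
        unfolding mm Lp sq by simp
      also have "\<dots> = (real (L n))\<^sup>2 / (real n powr (1 / p - 1 / 4))\<^sup>2" unfolding e d by simp
      finally show ?case by (simp add: power_divide)
    qed
  qed
qed

lemma rate_lt2:
  fixes L :: "nat \<Rightarrow> nat"
  assumes p: "p < 2" "p \<ge> 1" and lim: "(\<lambda>n. real (L n) / real n powr (1 / (2 * p))) \<longlonglongrightarrow> 0"
  shows "(\<lambda>n. (real (L n) powr (min p 2) * real n powr (- 2 / max p 2)) / (1 / sqrt (real n))) \<longlonglongrightarrow> 0"
proof -
  have l2: "(\<lambda>n. (real (L n) / real n powr (1 / (2 * p))) powr p) \<longlonglongrightarrow> 0"
    using p by (intro tendsto_zero_powrI[OF lim]) auto
  show ?thesis
  proof (rule Lim_transform_eventually[OF l2])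
    show "\<forall>\<^sub>F n in sequentially. (real (L n) / real n powr (1 / (2 * p))) powr p =
      (real (L n) powr (min p 2) * real n powr (- 2 / max p 2)) / (1 / sqrt (real n))"
      using eventually_gt_at_top[of "0::nat"]
    proof eventually_elim
      case (elim n)
      have np: "real n > 0" using elim by simp
      have mm: "min p 2 = p" "max p 2 = 2" using p by auto
      have sq: "sqrt (real n) = real n powr (1/2)" using np by (simp add: powr_half_sqrt)
      have d: "(real n powr (1 / (2 * p))) powr p = real n powr (1 / 2)"
        using np p by (simp add: powr_powr)
      have e: "real n powr (- 1) * real n powr (1/2) = 1 / real n powr (1 / 2)"
        by (subst powr_add[symmetric]) (simp add: powr_minus_divide)
      have "(real (L n) powr (min p 2) * real n powr (- 2 / max p 2)) / (1 / sqrt (real n))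
          = real (L n) powr p * (real n powr (- 1) * real n powr (1/2))"
        unfolding mm sq by simp
      also have "\<dots> = real (L n) powr p / (real n powr (1 / (2 * p))) powr p" unfolding e d by simp
      finally show ?case using np by (simp add: powr_divide)
    qed
  qed
qed

lemma meas_comp_epsvec:
  assumes eps_rv: "\<And>i. eps i \<in> borel_measurable M"
    and Hm: "(\<lambda>(u, e). H u e) \<in> borel_measurable (borel \<Otimes>\<^sub>M (\<Pi>\<^sub>M k\<in>UNIV. borel))"
  shows "(\<lambda>\<omega>. H u (epsvec eps 0 \<omega>)) \<in> borel_measurable M"
proof -
  have E: "(\<lambda>\<omega>. epsvec eps 0 \<omega>) \<in> measurable M (\<Pi>\<^sub>M k\<in>UNIV. borel)"
    unfolding epsvec_def by (rule measurable_PiM_single') (auto intro: eps_rv)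
  have "(\<lambda>\<omega>. (u, epsvec eps 0 \<omega>)) \<in> measurable M (borel \<Otimes>\<^sub>M (\<Pi>\<^sub>M k\<in>UNIV. borel))"
    using E by measurable
  from measurable_compose[OF this Hm] show ?thesis by simp
qed

lemma segment_nbhd:
  fixes S :: "'d::real_normed_vector set"
  assumes S: "convex S" and x: "x \<in> nbhd S \<delta>" and y: "y \<in> nbhd S \<delta>" and z: "z \<in> closed_segment x y"
  shows "z \<in> nbhd S \<delta>"
proof -
  from x obtain x1 where x1: "x1 \<in> S" "ereal (dist x x1) < \<delta>" unfolding nbhd_def by blast
  from y obtain y1 where y1: "y1 \<in> S" "ereal (dist y y1) < \<delta>" unfolding nbhd_def by blast
  from z obtain th where th: "0 \<le> th" "th \<le> 1" "z = (1 - th) *\<^sub>R x + th *\<^sub>R y"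
    unfolding closed_segment_def by blast
  define w where "w = (1 - th) *\<^sub>R x1 + th *\<^sub>R y1"
  have wS: "w \<in> S" unfolding w_def using S x1(1) y1(1) th by (intro convexD) auto
  have "dist z w = norm ((1 - th) *\<^sub>R (x - x1) + th *\<^sub>R (y - y1))"
    by (simp add: th(3) w_def dist_norm algebra_simps)
  also have "\<dots> \<le> (1 - th) * dist x x1 + th * dist y y1"
    using th by (intro order_trans[OF norm_triangle_ineq]) (simp add: dist_norm)
  finally have dz: "dist z w \<le> (1 - th) * dist x x1 + th * dist y y1" .
  have "ereal (dist z w) < \<delta>"
  proof (cases \<delta>)
    case (real r)
    with x1 y1 have "dist x x1 < r" "dist y y1 < r" by auto
    then have "(1 - th) * dist x x1 + th * dist y y1 < (1 - th) * r + th * r"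
      using th
      by (cases "th = 0"; cases "th = 1") (auto intro!: add_less_le_mono add_le_less_mono mult_strict_left_mono mult_left_mono)
    moreover have "(1 - th) * r + th * r = r" by (simp add: algebra_simps)
    ultimately show ?thesis using dz real by simp
  next
    case PInf then show ?thesis by simp
  next
    case MInf then show ?thesis using x1 by simp
  qed
  with wS show ?thesis unfolding nbhd_def by blast
qed

lemma blinfun_quad_bound:
  fixes F :: "'d::real_normed_vector \<Rightarrow>\<^sub>L ('d \<Rightarrow>\<^sub>L real)"
  shows "\<bar>blinfun_apply (blinfun_apply F w) w\<bar> \<le> norm F * (norm w)\<^sup>2"
proof -
  have "\<bar>blinfun_apply (blinfun_apply F w) w\<bar> \<le> norm (blinfun_apply F w) * norm w"
    using norm_blinfun[of "blinfun_apply F w" w] by simp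
  also have "\<dots> \<le> norm F * norm w * norm w"
    by (intro mult_right_mono norm_blinfun) simp
  finally show ?thesis by (simp add: power2_eq_square mult.assoc)
qed

lemma sq_sum_le: "(x + y)\<^sup>2 \<le> 2 * (x\<^sup>2 + y\<^sup>2)" for x y :: real
proof -
  have "0 \<le> (x - y)\<^sup>2" by simp
  moreover have "2 * (x\<^sup>2 + y\<^sup>2) - (x + y)\<^sup>2 = (x - y)\<^sup>2" by (simp add: power2_eq_square algebra_simps)
  ultimately show ?thesis by linarith
qed

theorem lemmaC5:
  fixes M :: "'w measure"
    and eps :: "int \<Rightarrow> 'w \<Rightarrow> real"
    and Gn :: "nat \<Rightarrow> real \<Rightarrow> (nat \<Rightarrow> real) \<Rightarrow> 'd::euclidean_space"
    and G :: "real \<Rightarrow> (nat \<Rightarrow> real) \<Rightarrow> 'd"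
    and f :: "'d \<Rightarrow> real"
    and f' :: "'d \<Rightarrow> ('d \<Rightarrow>\<^sub>L real)"
    and f'' :: "'d \<Rightarrow> ('d \<Rightarrow>\<^sub>L ('d \<Rightarrow>\<^sub>L real))"
    and muhat :: "nat \<Rightarrow> nat \<Rightarrow> 'w \<Rightarrow> 'd"
    and mutilde :: "nat \<Rightarrow> nat \<Rightarrow> 'w \<Rightarrow> 'd"
    and \<tau> L :: "nat \<Rightarrow> nat"
    and p q C_G C_f :: real
    and \<delta> :: ereal
  defines "mun \<equiv> (\<lambda>n u. integral\<^sup>L M (\<lambda>\<omega>. Gn n u (epsvec eps 0 \<omega>)))"
    and "Mset \<equiv> convex hull ((\<lambda>u. integral\<^sup>L M (\<lambda>\<omega>. G u (epsvec eps 0 \<omega>))) ` {0..1})"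
    and "I2 \<equiv> (\<lambda>n u \<omega>. (1 / real n) * (\<Sum>t\<in>{\<tau> n + L n..nat \<lfloor>real n * u\<rfloor>}.
              blinfun_apply (blinfun_apply (f'' (mutilde t n \<omega>))
                  (integral\<^sup>L M (\<lambda>\<omega>'. Gn n (real t / real n) (epsvec eps 0 \<omega>')) - muhat (t - L n) n \<omega>))
                (integral\<^sup>L M (\<lambda>\<omega>'. Gn n (real t / real n) (epsvec eps 0 \<omega>')) - muhat (t - L n) n \<omega>) / 2))"
  assumes M: "prob_space M"
    and eps_rv: "\<And>i. eps i \<in> borel_measurable M"
    and eps_indep: "prob_space.indep_vars M (\<lambda>_. borel) eps UNIV"
    and eps_id: "\<And>i. distr M borel (eps i) = distr M borel (eps 0)"
    and Gn_meas: "\<And>n. (\<lambda>(u, e). Gn n u e) \<in> borel_measurable (borel \<Otimes>\<^sub>M (\<Pi>\<^sub>M k\<in>UNIV. borel))"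
    and G_meas: "(\<lambda>(u, e). G u e) \<in> borel_measurable (borel \<Otimes>\<^sub>M (\<Pi>\<^sub>M k\<in>UNIV. borel))"
    and q: "q > 2" and p: "p \<ge> 1"
    and A1: "(\<lambda>n. SUP u\<in>{0..1}. Lq_norm M q (\<lambda>\<omega>. Gn n u (epsvec eps 0 \<omega>) - G u (epsvec eps 0 \<omega>)))
               \<longlonglongrightarrow> 0"
    and A2: "(SUP n. SUP u\<in>{0..1}. Lq_norm M q (\<lambda>\<omega>. Gn n u (epsvec eps 0 \<omega>)))
             + (SUP n. pvar M q p (\<lambda>u \<omega>. Gn n u (epsvec eps 0 \<omega>))) \<le> ennreal C_G"
    and delta: "\<delta> > 0"
    and f_deriv: "\<And>x. (f has_derivative blinfun_apply (f' x)) (at x)"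
    and f'_deriv: "\<And>x. (f' has_derivative blinfun_apply (f'' x)) (at x)"
    and A4: "\<And>x. x \<in> nbhd Mset \<delta> \<Longrightarrow> \<bar>f x\<bar> + norm (f' x) + norm (f'' x) \<le> C_f"
    and muhat_meas: "\<And>t n. muhat t n \<in> borel_measurable (past_sigma M eps (int t))"
    and tau: "\<And>n. \<tau> n \<ge> 1"
    and L: "filterlim L at_top sequentially"
    and A5: "small_oP M (\<lambda>n \<omega>. \<Sum>t\<in>{\<tau> n..n}. (norm (muhat t n \<omega> - mun n (real t / real n)))\<^sup>2)
               (\<lambda>n. sqrt (real n))"
    and A6: "(\<lambda>n. measure M {\<omega>\<in>space M. \<forall>t\<in>{\<tau> n..n}. muhat t n \<omega> \<in> nbhd Mset \<delta>}) \<longlonglongrightarrow> 1"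
    and mutilde: "\<And>n t \<omega>. \<omega> \<in> space M \<Longrightarrow> \<tau> n + L n \<le> t \<Longrightarrow> t \<le> n \<Longrightarrow>
               mutilde t n \<omega> \<in> closed_segment (muhat (t - L n) n \<omega>) (mun n (real t / real n))"
  shows "oP_plus_OP M (\<lambda>n \<omega>. SUP u\<in>{0..1}. \<bar>I2 n u \<omega>\<bar>) (\<lambda>n. 1 / sqrt (real n))
           (\<lambda>n. real (L n) powr (min p 2) * real n powr (- 2 / max p 2))
         \<and> (p \<ge> 2 \<longrightarrow> (\<lambda>n. real (L n) / real n powr (1 / p - 1 / 4)) \<longlonglongrightarrow> 0 \<longrightarrow>
           small_oP M (\<lambda>n \<omega>. SUP u\<in>{0..1}. \<bar>I2 n u \<omega>\<bar>) (\<lambda>n. 1 / sqrt (real n)))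
         \<and> (p < 2 \<longrightarrow> (\<lambda>n. real (L n) / real n powr (1 / (2 * p))) \<longlonglongrightarrow> 0 \<longrightarrow>
           small_oP M (\<lambda>n \<omega>. SUP u\<in>{0..1}. \<bar>I2 n u \<omega>\<bar>) (\<lambda>n. 1 / sqrt (real n)))"
proof -
  interpret P: prob_space M by (rule M)
  define C where "C = max C_G 0"
  define Cf1 where "Cf1 = max C_f 0"
  define s where "s n = real (L n) powr (min p 2) * real n powr (- 2 / max p 2)" for n
  define r where "r n = 1 / sqrt (real n)" for n :: nat
  define X where "X n \<omega> = (SUP u\<in>{0..1}. \<bar>I2 n u \<omega>\<bar>)" for n \<omega>
  define E where "E n = {\<omega>\<in>space M. \<forall>t\<in>{\<tau> n..n}. muhat t n \<omega> \<in> nbhd Mset \<delta>}" for n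
  define S1 where "S1 n = (\<Sum>t\<in>{\<tau> n + L n..n}. (norm (mun n (real t / real n) - mun n (real (t - L n) / real n)))\<^sup>2)" for n
  define S2 where "S2 n \<omega> = (\<Sum>t\<in>{\<tau> n..n}. (norm (muhat t n \<omega> - mun n (real t / real n)))\<^sup>2)" for n \<omega>
  have C0: "C \<ge> 0" by (simp add: C_def)
  have Cf0: "Cf1 \<ge> 0" by (simp add: Cf1_def)
  have mGn: "(\<lambda>\<omega>. Gn n u (epsvec eps 0 \<omega>)) \<in> borel_measurable M" for n u
    by (rule meas_comp_epsvec[OF eps_rv Gn_meas])
  have mG: "(\<lambda>\<omega>. G u (epsvec eps 0 \<omega>)) \<in> borel_measurable M" for u
    by (rule meas_comp_epsvec[OF eps_rv G_meas])
  have A2': "(SUP n. SUP u\<in>{0..1}. Lq_norm M q (\<lambda>\<omega>. Gn n u (epsvec eps 0 \<omega>)))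
             + (SUP n. pvar M q p (\<lambda>u \<omega>. Gn n u (epsvec eps 0 \<omega>))) \<le> ennreal C"
    using A2 by (rule order_trans) (simp add: C_def ennreal_leI)
  have A2a: "Lq_norm M q (\<lambda>\<omega>. Gn n u (epsvec eps 0 \<omega>)) \<le> ennreal C" if "u \<in> {0..1}" for n u
  proof -
    have "Lq_norm M q (\<lambda>\<omega>. Gn n u (epsvec eps 0 \<omega>)) \<le> (SUP n. SUP u\<in>{0..1}. Lq_norm M q (\<lambda>\<omega>. Gn n u (epsvec eps 0 \<omega>)))"
      by (rule SUP_upper2[OF UNIV_I], rule SUP_upper[OF that])
    also have "\<dots> \<le> (SUP n. SUP u\<in>{0..1}. Lq_norm M q (\<lambda>\<omega>. Gn n u (epsvec eps 0 \<omega>)))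
             + (SUP n. pvar M q p (\<lambda>u \<omega>. Gn n u (epsvec eps 0 \<omega>)))" by (rule add_increasing2) auto
    finally show ?thesis using A2' by (rule order_trans)
  qed
  have A2b: "pvar M q p (\<lambda>u \<omega>. Gn n u (epsvec eps 0 \<omega>)) \<le> ennreal C" for n
  proof -
    have "pvar M q p (\<lambda>u \<omega>. Gn n u (epsvec eps 0 \<omega>)) \<le> (SUP n. pvar M q p (\<lambda>u \<omega>. Gn n u (epsvec eps 0 \<omega>)))"
      by (rule SUP_upper) simp
    also have "\<dots> \<le> (SUP n. SUP u\<in>{0..1}. Lq_norm M q (\<lambda>\<omega>. Gn n u (epsvec eps 0 \<omega>)))
             + (SUP n. pvar M q p (\<lambda>u \<omega>. Gn n u (epsvec eps 0 \<omega>)))" by (rule add_increasing) auto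
    finally show ?thesis using A2' by (rule order_trans)
  qed
  have intGn: "integrable M (\<lambda>\<omega>. Gn n u (epsvec eps 0 \<omega>))" if "u \<in> {0..1}" for n u
  proof -
    have "Lq_norm M q (\<lambda>\<omega>. Gn n u (epsvec eps 0 \<omega>)) \<noteq> \<infinity>"
      using A2a[OF that, of n] by (auto simp: top_unique)
    moreover have "q > 1" using q by simp
    ultimately show ?thesis using Lq_integral_bound[OF M mGn[of n u]] by blast
  qed
  have diffb: "norm (mun n u - mun n v) \<le> enn2real (Lq_norm M q (\<lambda>\<omega>. Gn n u (epsvec eps 0 \<omega>) - Gn n v (epsvec eps 0 \<omega>)))"
    if "u \<in> {0..1}" "v \<in> {0..1}" "Lq_norm M q (\<lambda>\<omega>. Gn n u (epsvec eps 0 \<omega>) - Gn n v (epsvec eps 0 \<omega>)) \<noteq> \<infinity>" for n u v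
  proof -
    have m: "(\<lambda>\<omega>. Gn n u (epsvec eps 0 \<omega>) - Gn n v (epsvec eps 0 \<omega>)) \<in> borel_measurable M"
      using mGn by measurable
    have "mun n u - mun n v = integral\<^sup>L M (\<lambda>\<omega>. Gn n u (epsvec eps 0 \<omega>) - Gn n v (epsvec eps 0 \<omega>))"
      unfolding mun_def using intGn that by (simp add: Bochner_Integration.integral_diff)
    moreover have "ennreal (norm (integral\<^sup>L M (\<lambda>\<omega>. Gn n u (epsvec eps 0 \<omega>) - Gn n v (epsvec eps 0 \<omega>))))
       \<le> Lq_norm M q (\<lambda>\<omega>. Gn n u (epsvec eps 0 \<omega>) - Gn n v (epsvec eps 0 \<omega>))"
      using Lq_integral_bound[OF M m _ that(3)] q by simp
    then have "enn2real (ennreal (norm (integral\<^sup>L M (\<lambda>\<omega>. Gn n u (epsvec eps 0 \<omega>) - Gn n v (epsvec eps 0 \<omega>)))))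
       \<le> enn2real (Lq_norm M q (\<lambda>\<omega>. Gn n u (epsvec eps 0 \<omega>) - Gn n v (epsvec eps 0 \<omega>)))"
      using that(3) by (intro enn2real_mono) (auto simp: top.not_eq_extremum)
    ultimately show ?thesis by simp
  qed
  have chain: "(\<Sum>j<k. norm (mun n (real (b + Suc j * L n) / real n) - mun n (real (b + j * L n) / real n)) powr p) \<le> C powr p"
    if nL: "n \<ge> 1" "L n \<ge> 1" "b \<ge> 1" "b + k * L n \<le> n" for n b k
  proof -
    define v where "v j = real (b + j * L n) / real n" for j
    have inc: "v j < v (Suc j)" if "j < k" for j using nL by (simp add: v_def divide_strict_right_mono)
    have v0: "0 < v 0" using nL by (simp add: v_def)
    have vk: "v k \<le> 1"
    proof -
      have "real (b + k * L n) \<le> real n" using nL(4) of_nat_le_iff by blast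
      moreover have "real n > 0" using nL by simp
      ultimately show ?thesis unfolding v_def by (simp only: divide_le_eq_1_pos)
    qed
    have vI: "v j \<in> {0..1}" if "j \<le> k" for j
    proof -
      have "b + j * L n \<le> b + k * L n" using that by simp
      then have "real (b + j * L n) \<le> real n" using nL(4) of_nat_le_iff by (meson le_trans)
      moreover have "real n > 0" using nL by simp
      ultimately show ?thesis unfolding v_def by (simp only: divide_le_eq_1_pos atLeastAtMost_iff) simp
    qed
    note cb = chain_bound[where H = "\<lambda>u \<omega>. Gn n u (epsvec eps 0 \<omega>)", OF A2b[of n] C0 p inc v0 vk]
    have "(\<Sum>j<k. norm (mun n (v (Suc j)) - mun n (v j)) powr p)
        \<le> (\<Sum>j<k. enn2real (Lq_norm M q (\<lambda>\<omega>. Gn n (v (Suc j)) (epsvec eps 0 \<omega>) - Gn n (v j) (epsvec eps 0 \<omega>))) powr p)"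
    proof (rule sum_mono)
      fix j assume j: "j \<in> {..<k}"
      show "norm (mun n (v (Suc j)) - mun n (v j)) powr p
        \<le> enn2real (Lq_norm M q (\<lambda>\<omega>. Gn n (v (Suc j)) (epsvec eps 0 \<omega>) - Gn n (v j) (epsvec eps 0 \<omega>))) powr p"
        using j p cb vI[of j] vI[of "Suc j"] by (intro powr_mono2 diffb) auto
    qed
    also have "\<dots> \<le> C powr p" using cb by blast
    finally show ?thesis by (simp add: v_def algebra_simps)
  qed
  have S1b: "S1 n / real n \<le> (C\<^sup>2 + 1 + C powr p) * s n" if nL: "n \<ge> 1" "L n \<ge> 1" for n
  proof -
    define d where "d t = norm (mun n (real t / real n) - mun n (real (t - L n) / real n))" for t
    have gch: "(\<Sum>j<k. d (b + Suc j * L n) powr p) \<le> C powr p" if "b \<ge> 1" "b + k * L n \<le> n" for b k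
    proof -
      have "(\<Sum>j<k. d (b + Suc j * L n) powr p)
         = (\<Sum>j<k. norm (mun n (real (b + Suc j * L n) / real n) - mun n (real (b + j * L n) / real n)) powr p)"
        by (intro sum.cong refl) (simp add: d_def algebra_simps)
      also have "\<dots> \<le> C powr p" using chain[OF nL that] .
      finally show ?thesis .
    qed
    have dC: "d t \<le> C" if "t \<in> {\<tau> n + L n..n}" for t
    proof (rule ccontr)
      assume "\<not> d t \<le> C"
      then have "C powr p < d t powr p" using C0 p by (intro powr_less_mono2) auto
      moreover have "(\<Sum>j<1. d (t - L n + Suc j * L n) powr p) \<le> C powr p"
        using that tau[of n] by (intro gch) auto
      moreover have "t - L n + Suc 0 * L n = t" using that by auto
      ultimately show False by simp
    qed
    have sp: "(\<Sum>t\<in>{\<tau> n + L n..n}. d t powr p) \<le> real (L n) * C powr p"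
      using nL tau[of n] by (intro residue_sum gch) auto
    have "S1 n / real n \<le> (C\<^sup>2 + 1 + C powr p) * (real (L n) powr (min p 2) * real n powr (- 2 / max p 2))"
      unfolding S1_def using S1_bound[of d "\<tau> n + L n" n C p "L n", OF _ dC C0 sp nL(2) nL(1) p] tau[of n]
      by (simp add: d_def)
    then show ?thesis by (simp add: s_def)
  qed
  define mu where "mu v = integral\<^sup>L M (\<lambda>\<omega>. G v (epsvec eps 0 \<omega>))" for v
  have muM: "mu v \<in> Mset" if "v \<in> {0..1}" for v
    unfolding Mset_def mu_def using that by (intro hull_inc) auto
  have near: "\<forall>\<^sub>F n in sequentially. \<forall>v\<in>{0..1}. mun n v \<in> nbhd Mset \<delta>"
  proof (cases \<delta>)
    case PInf
    then show ?thesis using muM[of 0] unfolding nbhd_def by (auto intro!: always_eventually)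
  next
    case MInf then show ?thesis using delta by simp
  next
    case (real d0)
    with delta have d0: "d0 > 0" by simp
    have "ennreal d0 > 0" using d0 by simp
    from order_tendstoD(2)[OF A1 this]
    have ev: "\<forall>\<^sub>F n in sequentially. (SUP u\<in>{0..1}. Lq_norm M q (\<lambda>\<omega>. Gn n u (epsvec eps 0 \<omega>) - G u (epsvec eps 0 \<omega>))) < ennreal d0" .
    show ?thesis using ev
    proof eventually_elim
      case (elim n)
      show ?case
      proof
        fix v :: real assume v: "v \<in> {0..1}"
        have lt: "Lq_norm M q (\<lambda>\<omega>. Gn n v (epsvec eps 0 \<omega>) - G v (epsvec eps 0 \<omega>)) < ennreal d0"
          using elim v by (meson SUP_upper le_less_trans)
        then have fin: "Lq_norm M q (\<lambda>\<omega>. Gn n v (epsvec eps 0 \<omega>) - G v (epsvec eps 0 \<omega>)) \<noteq> \<infinity>"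
          by (auto simp: top_unique)
        have m: "(\<lambda>\<omega>. Gn n v (epsvec eps 0 \<omega>) - G v (epsvec eps 0 \<omega>)) \<in> borel_measurable M"
          using mGn mG by measurable
        have "q > 1" using q by simp
        note lb = Lq_integral_bound[OF M m this fin]
        have iG: "integrable M (\<lambda>\<omega>. G v (epsvec eps 0 \<omega>))"
        proof -
          have "integrable M (\<lambda>\<omega>. Gn n v (epsvec eps 0 \<omega>) - (Gn n v (epsvec eps 0 \<omega>) - G v (epsvec eps 0 \<omega>)))"
            by (rule Bochner_Integration.integrable_diff[OF intGn[OF v, of n] conjunct1[OF lb]])
          then show ?thesis by simp
        qed
        have "integral\<^sup>L M (\<lambda>\<omega>. Gn n v (epsvec eps 0 \<omega>) - G v (epsvec eps 0 \<omega>)) = mun n v - mu v"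
          unfolding mun_def mu_def using intGn[OF v] iG by (simp add: Bochner_Integration.integral_diff)
        with lb lt have "ennreal (norm (mun n v - mu v)) < ennreal d0" by (metis le_less_trans)
        then have "dist (mun n v) (mu v) < d0" by (simp add: dist_norm ennreal_less_iff)
        then show "mun n v \<in> nbhd Mset \<delta>" unfolding nbhd_def using muM[OF v] real by auto
      qed
    qed
  qed
  define Tm where "Tm n t \<omega> = blinfun_apply (blinfun_apply (f'' (mutilde t n \<omega>))
                  (mun n (real t / real n) - muhat (t - L n) n \<omega>))
                (mun n (real t / real n) - muhat (t - L n) n \<omega>) / 2" for n t \<omega>
  have I2u: "I2 n u \<omega> = (1 / real n) * (\<Sum>t\<in>{\<tau> n + L n..nat \<lfloor>real n * u\<rfloor>}. Tm n t \<omega>)" for n u \<omega>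
    unfolding I2_def Tm_def mun_def by simp
  have bdd: "bdd_above ((\<lambda>u. \<bar>I2 n u \<omega>\<bar>) ` {0..1})" for n \<omega>
  proof -
    have "(\<lambda>u. \<bar>I2 n u \<omega>\<bar>) ` {0..1} \<subseteq> (\<lambda>k. \<bar>(1 / real n) * (\<Sum>t\<in>{\<tau> n + L n..k}. Tm n t \<omega>)\<bar>) ` {..n}"
    proof
      fix x assume "x \<in> (\<lambda>u. \<bar>I2 n u \<omega>\<bar>) ` {0..1}"
      then obtain u where u: "u \<in> {0..1}" "x = \<bar>I2 n u \<omega>\<bar>" by blast
      have "real n * u \<le> real n" using u by (simp add: mult_left_le)
      then have "nat \<lfloor>real n * u\<rfloor> \<le> n" by linarith
      then show "x \<in> (\<lambda>k. \<bar>(1 / real n) * (\<Sum>t\<in>{\<tau> n + L n..k}. Tm n t \<omega>)\<bar>) ` {..n}"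
        using u I2u by auto
    qed
    then show ?thesis by (meson bdd_above_mono bdd_above_finite finite_imageI finite_atMost)
  qed
  have X0: "X n \<omega> \<ge> 0" for n \<omega>
    unfolding X_def by (rule cSUP_upper2[OF bdd, of 0]) auto
  have S1nn: "S1 n \<ge> 0" for n unfolding S1_def by (intro sum_nonneg) simp
  have S2nn: "S2 n \<omega> \<ge> 0" for n \<omega> unfolding S2_def by (intro sum_nonneg) simp
  have convM: "convex Mset" unfolding Mset_def by simp
  have Xb: "\<forall>\<^sub>F n in sequentially. \<forall>\<omega>\<in>E n. X n \<omega> \<le> Cf1 * S1 n / real n + Cf1 * S2 n \<omega> / real n"
    using near eventually_ge_at_top[of "1::nat"]
  proof eventually_elim
    case (elim n)
    show ?case
    proof
      fix \<omega> assume w: "\<omega> \<in> E n"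
      then have wM: "\<omega> \<in> space M" and wE: "\<And>t. t \<in> {\<tau> n..n} \<Longrightarrow> muhat t n \<omega> \<in> nbhd Mset \<delta>"
        unfolding E_def by auto
      define dd where "dd t = norm (mun n (real t / real n) - mun n (real (t - L n) / real n))" for t
      define bb where "bb t = norm (mun n (real (t - L n) / real n) - muhat (t - L n) n \<omega>)" for t
      have pt: "\<bar>Tm n t \<omega>\<bar> \<le> Cf1 * ((dd t)\<^sup>2 + (bb t)\<^sup>2)" if t: "t \<in> {\<tau> n + L n..n}" for t
      proof -
        have tn: "real t / real n \<in> {0..1}" using t elim by auto
        have m1: "muhat (t - L n) n \<omega> \<in> nbhd Mset \<delta>" using t by (intro wE) auto
        have m2: "mun n (real t / real n) \<in> nbhd Mset \<delta>" using elim tn by blast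
        have "mutilde t n \<omega> \<in> nbhd Mset \<delta>"
          using t by (intro segment_nbhd[OF convM m1 m2] mutilde[OF wM]) auto
        then have "\<bar>f (mutilde t n \<omega>)\<bar> + norm (f' (mutilde t n \<omega>)) + norm (f'' (mutilde t n \<omega>)) \<le> C_f"
          by (rule A4)
        moreover have "\<bar>f (mutilde t n \<omega>)\<bar> \<ge> 0" "norm (f' (mutilde t n \<omega>)) \<ge> 0" by simp_all
        ultimately have "norm (f'' (mutilde t n \<omega>)) \<le> C_f" by linarith
        then have nf: "norm (f'' (mutilde t n \<omega>)) \<le> Cf1" unfolding Cf1_def by linarith
        define w where "w = mun n (real t / real n) - muhat (t - L n) n \<omega>"
        have "norm w \<le> dd t + bb t" unfolding w_def dd_def bb_def
          using norm_triangle_ineq[of "mun n (real t / real n) - mun n (real (t - L n) / real n)"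
              "mun n (real (t - L n) / real n) - muhat (t - L n) n \<omega>"] by simp
        then have "(norm w)\<^sup>2 \<le> (dd t + bb t)\<^sup>2" by (intro power_mono) auto
        also have "\<dots> \<le> 2 * ((dd t)\<^sup>2 + (bb t)\<^sup>2)"
          by (rule sq_sum_le)
        finally have w2: "(norm w)\<^sup>2 \<le> 2 * ((dd t)\<^sup>2 + (bb t)\<^sup>2)" .
        have "\<bar>Tm n t \<omega>\<bar> \<le> norm (f'' (mutilde t n \<omega>)) * (norm w)\<^sup>2 / 2"
          unfolding Tm_def w_def[symmetric] using blinfun_quad_bound[of "f'' (mutilde t n \<omega>)" w] by simp
        also have "\<dots> \<le> Cf1 * (2 * ((dd t)\<^sup>2 + (bb t)\<^sup>2)) / 2"
          using nf w2 Cf0 by (intro divide_right_mono mult_mono) auto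
        also have "Cf1 * (2 * ((dd t)\<^sup>2 + (bb t)\<^sup>2)) / 2 = Cf1 * ((dd t)\<^sup>2 + (bb t)\<^sup>2)" by simp
        finally show ?thesis .
      qed
      have bsum: "(\<Sum>t\<in>{\<tau> n + L n..n}. (bb t)\<^sup>2) \<le> S2 n \<omega>"
      proof -
        have inj: "inj_on (\<lambda>t. t - L n) {\<tau> n + L n..n}" by (auto simp: inj_on_def)
        have "(\<Sum>t\<in>{\<tau> n + L n..n}. (bb t)\<^sup>2) = (\<Sum>t\<in>{\<tau> n + L n..n}. (norm (muhat (t - L n) n \<omega> - mun n (real (t - L n) / real n)))\<^sup>2)"
          by (simp add: bb_def norm_minus_commute)
        also have "\<dots> = (\<Sum>s\<in>(\<lambda>t. t - L n) ` {\<tau> n + L n..n}. (norm (muhat s n \<omega> - mun n (real s / real n)))\<^sup>2)"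
          by (simp add: sum.reindex[OF inj])
        also have "\<dots> \<le> S2 n \<omega>" unfolding S2_def
          by (rule sum_mono2) auto
        finally show ?thesis .
      qed
      show "X n \<omega> \<le> Cf1 * S1 n / real n + Cf1 * S2 n \<omega> / real n"
        unfolding X_def
      proof (rule cSUP_least)
        fix u :: real assume u: "u \<in> {0..1}"
        have "real n * u \<le> real n" using u by (simp add: mult_left_le)
        then have Kn: "nat \<lfloor>real n * u\<rfloor> \<le> n" by linarith
        have "\<bar>\<Sum>t\<in>{\<tau> n + L n..nat \<lfloor>real n * u\<rfloor>}. Tm n t \<omega>\<bar> \<le> (\<Sum>t\<in>{\<tau> n + L n..nat \<lfloor>real n * u\<rfloor>}. \<bar>Tm n t \<omega>\<bar>)"
          by (rule sum_abs)
        also have "\<dots> \<le> (\<Sum>t\<in>{\<tau> n + L n..nat \<lfloor>real n * u\<rfloor>}. Cf1 * ((dd t)\<^sup>2 + (bb t)\<^sup>2))"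
          using Kn by (intro sum_mono pt) auto
        also have "\<dots> \<le> (\<Sum>t\<in>{\<tau> n + L n..n}. Cf1 * ((dd t)\<^sup>2 + (bb t)\<^sup>2))"
          using Kn Cf0 by (intro sum_mono2) auto
        also have "\<dots> = Cf1 * (S1 n + (\<Sum>t\<in>{\<tau> n + L n..n}. (bb t)\<^sup>2))"
          by (simp only: sum_distrib_left[symmetric] sum.distrib S1_def dd_def)
        also have "\<dots> \<le> Cf1 * (S1 n + S2 n \<omega>)"
          using bsum Cf0 by (intro mult_left_mono) auto
        finally have "\<bar>\<Sum>t\<in>{\<tau> n + L n..nat \<lfloor>real n * u\<rfloor>}. Tm n t \<omega>\<bar> \<le> Cf1 * (S1 n + S2 n \<omega>)" .
        then have "\<bar>I2 n u \<omega>\<bar> \<le> (1 / real n) * (Cf1 * (S1 n + S2 n \<omega>))"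
          unfolding I2u using elim by (simp add: abs_mult divide_right_mono)
        also have "(1 / real n) * (Cf1 * (S1 n + S2 n \<omega>)) = Cf1 * S1 n / real n + Cf1 * S2 n \<omega> / real n"
          by (simp add: add_divide_distrib distrib_left)
        finally show "\<bar>I2 n u \<omega>\<bar> \<le> Cf1 * S1 n / real n + Cf1 * S2 n \<omega> / real n" .
      qed simp
    qed
  qed
  have snn: "s n \<ge> 0" for n unfolding s_def by simp
  have evL: "\<forall>\<^sub>F n in sequentially. L n \<ge> 1"
    using L unfolding filterlim_at_top by blast
  define Z where "Z n \<omega> = min (X n \<omega>) (Cf1 * S1 n / real n)" for n \<omega>
  define Y where "Y n \<omega> = X n \<omega> - Z n \<omega>" for n \<omega>
  have bigZ: "big_OP M Z s"
    unfolding big_OP_def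
  proof (intro allI impI exI)
    fix \<eta> :: real assume \<eta>: "\<eta> > 0"
    show "\<forall>\<^sub>F n in sequentially. \<exists>A\<in>sets M. measure M A < \<eta> \<and>
        {\<omega> \<in> space M. \<bar>Z n \<omega>\<bar> > (Cf1 * (C\<^sup>2 + 1 + C powr p) + 1) * s n} \<subseteq> A"
      using evL eventually_ge_at_top[of "1::nat"]
    proof eventually_elim
      case (elim n)
      have "\<bar>Z n \<omega>\<bar> \<le> (Cf1 * (C\<^sup>2 + 1 + C powr p) + 1) * s n" for \<omega>
      proof -
        have Z0: "Z n \<omega> \<ge> 0" unfolding Z_def using X0 S1nn Cf0 by simp
        have "Z n \<omega> \<le> Cf1 * (S1 n / real n)" unfolding Z_def by simp
        also have "\<dots> \<le> Cf1 * ((C\<^sup>2 + 1 + C powr p) * s n)"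
          using S1b[OF elim(2) elim(1)] Cf0 by (intro mult_left_mono) auto
        also have "\<dots> \<le> (Cf1 * (C\<^sup>2 + 1 + C powr p) + 1) * s n"
          using snn[of n] by (simp add: algebra_simps)
        finally show ?thesis using Z0 by simp
      qed
      then have "{\<omega> \<in> space M. \<bar>Z n \<omega>\<bar> > (Cf1 * (C\<^sup>2 + 1 + C powr p) + 1) * s n} = {}"
        by (auto simp: not_less)
      then show ?case using \<eta> by (intro bexI[of _ "{}"]) auto
    qed
  qed
  have smallY: "small_oP M Y r"
    unfolding small_oP_def
  proof (intro allI impI)
    fix e \<eta> :: real assume e: "e > 0" and \<eta>: "\<eta> > 0"
    have EA6: "(\<lambda>n. measure M (E n)) \<longlonglongrightarrow> 1" using A6 unfolding E_def .
    have ev2: "\<forall>\<^sub>F n in sequentially. measure M (E n) > 1 - \<eta> / 2"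
      using order_tendstoD(1)[OF EA6] \<eta> by simp
    have ev3: "\<forall>\<^sub>F n in sequentially. measure M (E n) > 0"
      using order_tendstoD(1)[OF EA6] by simp
    have e1: "e / (Cf1 + 1) > 0" using e Cf0 by simp
    have \<eta>2: "\<eta> / 2 > 0" using \<eta> by simp
    have ev4: "\<forall>\<^sub>F n in sequentially. \<exists>A\<in>sets M. measure M A < \<eta> / 2 \<and>
        {\<omega>\<in>space M. \<bar>S2 n \<omega>\<bar> > e / (Cf1 + 1) * sqrt (real n)} \<subseteq> A"
      using A5[unfolded small_oP_def, rule_format, OF e1 \<eta>2] unfolding S2_def .
    show "\<forall>\<^sub>F n in sequentially. \<exists>A\<in>sets M. measure M A < \<eta> \<and> {\<omega> \<in> space M. \<bar>Y n \<omega>\<bar> > e * r n} \<subseteq> A"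
      using Xb ev2 ev3 ev4 eventually_ge_at_top[of "1::nat"]
    proof eventually_elim
      case (elim n)
      from elim(4) obtain A where A: "A \<in> sets M" "measure M A < \<eta> / 2"
        "{\<omega>\<in>space M. \<bar>S2 n \<omega>\<bar> > e / (Cf1 + 1) * sqrt (real n)} \<subseteq> A" by blast
      have Es: "E n \<in> sets M" using elim(3) measure_notin_sets by fastforce
      have Ec: "measure M (space M - E n) < \<eta> / 2"
        using P.prob_compl[OF Es] elim(2) by simp
      have Bs: "A \<union> (space M - E n) \<in> sets M" using A(1) Es by auto
      have mB: "measure M (A \<union> (space M - E n)) < \<eta>"
        using measure_Un_le[OF A(1), of "space M - E n"] Es A(2) Ec by auto
      have np: "real n > 0" using elim(5) by simp
      have sub: "{\<omega> \<in> space M. \<bar>Y n \<omega>\<bar> > e * r n} \<subseteq> A \<union> (space M - E n)"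
      proof
        fix \<omega> assume w: "\<omega> \<in> {\<omega> \<in> space M. \<bar>Y n \<omega>\<bar> > e * r n}"
        show "\<omega> \<in> A \<union> (space M - E n)"
        proof (rule ccontr)
          assume "\<omega> \<notin> A \<union> (space M - E n)"
          with w A(3) have wE: "\<omega> \<in> E n" and s2: "\<bar>S2 n \<omega>\<bar> \<le> e / (Cf1 + 1) * sqrt (real n)" by auto
          have Y0: "Y n \<omega> \<ge> 0" unfolding Y_def Z_def by simp
          have "Y n \<omega> \<le> Cf1 * S2 n \<omega> / real n"
          proof -
            have "X n \<omega> \<le> Cf1 * S1 n / real n + Cf1 * S2 n \<omega> / real n" using elim(1) wE by blast
            moreover have "Cf1 * S2 n \<omega> / real n \<ge> 0" using Cf0 S2nn[of n \<omega>] np by simp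
            ultimately show ?thesis unfolding Y_def Z_def by (simp add: min_def)
          qed
          also have "\<dots> \<le> (Cf1 + 1) * S2 n \<omega> / real n"
            using S2nn[of n \<omega>] np by (intro divide_right_mono mult_right_mono) auto
          also have "\<dots> \<le> (Cf1 + 1) * (e / (Cf1 + 1) * sqrt (real n)) / real n"
            using s2 S2nn[of n \<omega>] np Cf0 by (intro divide_right_mono mult_left_mono) auto
          also have "\<dots> = e * sqrt (real n) / real n" using Cf0 by simp
          also have "\<dots> = e * r n"
          proof -
            have "sqrt (real n) * sqrt (real n) = real n" using np by simp
            then show ?thesis unfolding r_def using np
              by (metis (no_types, lifting) nonzero_mult_div_cancel_left real_sqrt_gt_0_iff
                  times_divide_eq_right div_by_1 mult.right_neutral order_less_irrefl divide_divide_eq_left)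
          qed
          finally have "\<bar>Y n \<omega>\<bar> \<le> e * r n" using Y0 by simp
          with w show False by simp
        qed
      qed
      show ?case using Bs mB sub by blast
    qed
  qed
  have dec: "oP_plus_OP M X r s"
    unfolding oP_plus_OP_def using smallY bigZ by (intro exI[of _ Y] exI[of _ Z]) (auto simp: Y_def)
  have rpos: "\<forall>\<^sub>F n in sequentially. r n > 0"
    using eventually_ge_at_top[of "1::nat"] by eventually_elim (simp add: r_def)
  have Xeq: "(\<lambda>n \<omega>. SUP u\<in>{0..1}. \<bar>I2 n u \<omega>\<bar>) = X" by (intro ext) (simp add: X_def)
  have req: "(\<lambda>n. 1 / sqrt (real n)) = r" by (intro ext) (simp add: r_def)
  have seq: "(\<lambda>n. real (L n) powr (min p 2) * real n powr (- 2 / max p 2)) = s" by (intro ext) (simp add: s_def)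
  have srq: "(\<lambda>n. (real (L n) powr (min p 2) * real n powr (- 2 / max p 2)) / (1 / sqrt (real n))) = (\<lambda>n. s n / r n)"
    by (intro ext) (simp add: s_def r_def)
  show ?thesis
    unfolding Xeq req seq
  proof (intro conjI impI)
    show "oP_plus_OP M X r s" by (rule dec)
  next
    assume "2 \<le> p" "(\<lambda>n. real (L n) / real n powr (1 / p - 1 / 4)) \<longlonglongrightarrow> 0"
    from rate_ge2[OF this] have "(\<lambda>n. s n / r n) \<longlonglongrightarrow> 0" unfolding srq .
    then show "small_oP M X r" using oP_OP_small[OF dec _ rpos] snn by auto
  next
    assume "p < 2" "(\<lambda>n. real (L n) / real n powr (1 / (2 * p))) \<longlonglongrightarrow> 0"
    from rate_lt2[OF this(1) p this(2)] have "(\<lambda>n. s n / r n) \<longlonglongrightarrow> 0" unfolding srq .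
    then show "small_oP M X r" using oP_OP_small[OF dec _ rpos] snn by auto
  qed
qed

end
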